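(* There is no graded Poisson-Lie structure on $\mathcal M$ prolonging the Sklyanin bracket which is differential, i.e. which satisfies ${\bf d}\{f,h\}=\{{\bf d}f,h\}+(-1)^{\deg f}\{f,{\bf d}h\}$ for all $f,h\in\mathcal M$. (For instance, for either structure of Type I or II one has $\{{\bf d}a,b\}+\{a,{\bf d}b\}=-2ab\theta^0-(3+2bc)\theta^1\neq -2ab\theta^0-(1+2bc)\theta^1={\bf d}\{a,b\}$.)
   Context: $\mathcal A$ is the commutative algebra generated by $a,b,c,d$ (entries of $T=\begin{pmatrix}a&b\\c&d\end{pmatrix}$) modulo $ad-bc=1$, with $\Delta(T)=T\otimes T$. Sklyanin bracket: $\{a,b\}=-ab,\ \{a,c\}=-ac,\ \{b,d\}=-bd,\ \{c,d\}=-cd,\ \{c,b\}=0,\ \{a,d\}=-2bc$. $\mathcal M$ is the $\mathbb Z_2$-graded commutative algebra generated by even $a,b,c,d$ and odd $\theta^0,\theta^1,\theta^2$, with even generators central, $\theta^i\theta^j=-\theta^j\theta^i$, and $ad-bc=1$. Coactions: $\Delta_R\theta^i=\theta^i\otimes1$; $\Delta_L\theta^0=(1+2bc)\otimes\theta^0-ac\otimes\theta^1+bd\otimes\theta^2$, $\Delta_L\theta^1=-2ab\otimes\theta^0+a^2\otimes\theta^1-b^2\otimes\theta^2$, $\Delta_L\theta^2=2cd\otimes\theta^0-c^2\otimes\theta^1+d^2\otimes\theta^2$, extended multiplicatively. A graded Poisson bracket on $\mathcal M$ satisfies graded symmetry $\{x,y\}=(-1)^{\deg x\deg y+1}\{y,x\}$,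 graded Leibniz $\{xy,z\}=x\{y,z\}+(-1)^{\deg y\deg z}\{x,z\}y$, and super Jacobi $(-1)^{\deg x\deg z}\{\{x,y\},z\}+(-1)^{\deg y\deg z}\{\{z,x\},y\}+(-1)^{\deg x\deg y}\{\{y,z\},x\}=0$; it extends to $\mathcal M\otimes\mathcal M$ by $\{x\otimes y,z\otimes w\}=(-1)^{\deg y\deg z}(\{x,z\}\otimes yw+xz\otimes\{y,w\})$. It is graded Poisson-Lie if $\Delta\{f,h\}=\{\Delta f,\Delta h\}$ ($f,h\in\mathcal A$), $\Delta_{L,R}\{\theta^i,f\}=\{\Delta_{L,R}\theta^i,\Delta f\}$ ($f\in\mathcal A$) and $\Delta_{L,R}\{\theta^i,\theta^j\}=\{\Delta_{L,R}\theta^i,\Delta_{L,R}\theta^j\}$; it prolongs the Sklyanin bracket if it restricts to it on $\mathcal A$. The exterior derivative ${\bf d}:\mathcal M\to\mathcal M$ is the odd derivation (${\bf d}(xy)={\bf d}x\,y+(-1)^{\deg x}x\,{\bf d}y$, ${\bf d}^2=0$) determined on generators by ${\bf d}T=\theta T$ and ${\bf d}\theta=\theta\theta$, where $\theta=\begin{pmatrix}\theta^0&\theta^1\\ \theta^2&-\theta^0\end{pmatrix}$ and products are matrix products. *)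

theory Defs
  imports Complex_Main
begin

typedef sl2 = "{(a::complex, b::complex, c::complex, d::complex). a*d - b*c = 1}"
  by (rule exI[of _ "(1,0,0,1)"]) simp

definition ca :: "sl2 \<Rightarrow> complex" where "ca g = (case Rep_sl2 g of (a,b,c,d) \<Rightarrow> a)"
definition cb :: "sl2 \<Rightarrow> complex" where "cb g = (case Rep_sl2 g of (a,b,c,d) \<Rightarrow> b)"
definition cc :: "sl2 \<Rightarrow> complex" where "cc g = (case Rep_sl2 g of (a,b,c,d) \<Rightarrow> c)"
definition cd :: "sl2 \<Rightarrow> complex" where "cd g = (case Rep_sl2 g of (a,b,c,d) \<Rightarrow> d)"

text \<open>Matrix product g*h; the coproduct Delta(T) = T (x) T is (Delta f)(g,h) = f(g h).\<close>
definition sl2_mult :: "sl2 \<Rightarrow> sl2 \<Rightarrow> sl2" where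
  "sl2_mult g h = Abs_sl2 (ca g * ca h + cb g * cc h, ca g * cb h + cb g * cd h,
                           cc g * ca h + cd g * cc h, cc g * cb h + cd g * cd h)"

inductive_set polyfun :: "('p \<Rightarrow> complex) set \<Rightarrow> ('p \<Rightarrow> complex) set"
  for coords :: "('p \<Rightarrow> complex) set" where
  pf_const: "(\<lambda>_. c) \<in> polyfun coords"
| pf_coord: "f \<in> coords \<Longrightarrow> f \<in> polyfun coords"
| pf_add: "f \<in> polyfun coords \<Longrightarrow> g \<in> polyfun coords \<Longrightarrow> (\<lambda>x. f x + g x) \<in> polyfun coords"
| pf_mult: "f \<in> polyfun coords \<Longrightarrow> g \<in> polyfun coords \<Longrightarrow> (\<lambda>x. f x * g x) \<in> polyfun coords"

text \<open>The algebra A = C[a,b,c,d]/(ad-bc-1), realised as polynomial functions on SL(2,C).\<close>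
definition Acar :: "(sl2 \<Rightarrow> complex) set" where
  "Acar = polyfun {ca, cb, cc, cd}"

section \<open>Grassmann algebra (coefficients indexed by finite sets of generator indices)\<close>

type_synonym grass = "nat set \<Rightarrow> complex"

text \<open>Sign of theta^S theta^T = sign * theta^(S Un T) (S, T disjoint, increasing order).\<close>
definition gsign :: "nat set \<Rightarrow> nat set \<Rightarrow> complex" where
  "gsign S T = (-1) ^ card {(s,t). s \<in> S \<and> t \<in> T \<and> t < s}"

definition gmul :: "grass \<Rightarrow> grass \<Rightarrow> grass" where
  "gmul x y = (\<lambda>U. if finite U then (\<Sum>S\<in>Pow U. gsign S (U - S) * x S * y (U - S)) else 0)"

definition gone :: grass where "gone = (\<lambda>S. if S = {} then 1 else 0)"

definition gprod :: "grass list \<Rightarrow> grass" where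
  "gprod xs = foldr gmul xs gone"

text \<open>Shift of generator indices by 3 (theta^i of the second tensor factor is index i+3).\<close>
definition gshift :: "grass \<Rightarrow> grass" where
  "gshift v = (\<lambda>U. if (\<forall>s\<in>U. 3 \<le> s) then v ((\<lambda>s. s - 3) ` U) else 0)"

text \<open>Algebra map sending theta^i (i<3) to sigma i.\<close>
definition gsubst :: "(nat \<Rightarrow> grass) \<Rightarrow> grass \<Rightarrow> grass" where
  "gsubst \<sigma> v = (\<lambda>U. \<Sum>S\<in>Pow {0,1,2}. v S * gprod (map \<sigma> (sorted_list_of_set S)) U)"

section \<open>Superfunctions: Grassmann-valued functions on a point set\<close>

type_synonym 'p sfun = "'p \<Rightarrow> grass"

definition szero :: "'p sfun" where "szero = (\<lambda>p S. 0)"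
definition sadd :: "'p sfun \<Rightarrow> 'p sfun \<Rightarrow> 'p sfun" where "sadd x y = (\<lambda>p S. x p S + y p S)"
definition sscale :: "complex \<Rightarrow> 'p sfun \<Rightarrow> 'p sfun" where "sscale c x = (\<lambda>p S. c * x p S)"
definition smul :: "'p sfun \<Rightarrow> 'p sfun \<Rightarrow> 'p sfun" where "smul x y = (\<lambda>p. gmul (x p) (y p))"
definition sconst :: "('p \<Rightarrow> complex) \<Rightarrow> 'p sfun" where
  "sconst f = (\<lambda>p S. if S = {} then f p else 0)"
definition stheta :: "nat \<Rightarrow> 'p sfun" where
  "stheta i = (\<lambda>p S. if S = {i} then 1 else 0)"
definition ssum :: "'p sfun list \<Rightarrow> 'p sfun" where "ssum xs = foldr sadd xs szero"

text \<open>The superalgebra M = A[theta^0,theta^1,theta^2].\<close>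
definition Mcar :: "sl2 sfun set" where
  "Mcar = {x. \<forall>S. if S \<subseteq> {0,1,2} then (\<lambda>p. x p S) \<in> Acar else (\<forall>p. x p S = 0)}"

definition evenp :: "'p sfun \<Rightarrow> bool" where "evenp x = (\<forall>p S. odd (card S) \<longrightarrow> x p S = 0)"
definition oddp :: "'p sfun \<Rightarrow> bool" where "oddp x = (\<forall>p S. even (card S) \<longrightarrow> x p S = 0)"
definition hom :: "'p sfun \<Rightarrow> bool" where "hom x = (evenp x \<or> oddp x)"
definition pdeg :: "'p sfun \<Rightarrow> nat" where "pdeg x = (if evenp x then 0 else 1)"

abbreviation sa :: "sl2 sfun" where "sa \<equiv> sconst ca"
abbreviation sb :: "sl2 sfun" where "sb \<equiv> sconst cb"
abbreviation sc :: "sl2 sfun" where "sc \<equiv> sconst cc"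
abbreviation sd :: "sl2 sfun" where "sd \<equiv> sconst cd"

text \<open>Elements of M (x) M as Grassmann-valued functions on SL2 x SL2 with 6 odd generators;
  x (x) y  corresponds to  x(theta) * y(theta'), matching the sign rule of the graded tensor product.\<close>
definition tens :: "sl2 sfun \<Rightarrow> sl2 sfun \<Rightarrow> (sl2 \<times> sl2) sfun" where
  "tens x y = (\<lambda>pq. gmul (x (fst pq)) (gshift (y (snd pq))))"

definition DeltaR :: "sl2 sfun \<Rightarrow> (sl2 \<times> sl2) sfun" where
  "DeltaR x = (\<lambda>pq. x (sl2_mult (fst pq) (snd pq)))"

definition Lgen :: "sl2 \<Rightarrow> nat \<Rightarrow> grass" where
  "Lgen p i = (\<lambda>U.
     if i = 0 then (if U = {3} then 1 + 2 * cb p * cc p else if U = {4} then - (ca p * cc p)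
                    else if U = {5} then cb p * cd p else 0)
     else if i = 1 then (if U = {3} then - 2 * ca p * cb p else if U = {4} then ((ca p)^2)
                    else if U = {5} then - ((cb p)^2) else 0)
     else (if U = {3} then 2 * cc p * cd p else if U = {4} then - ((cc p)^2)
                    else if U = {5} then ((cd p)^2) else 0))"

definition DeltaL :: "sl2 sfun \<Rightarrow> (sl2 \<times> sl2) sfun" where
  "DeltaL x = (\<lambda>pq. gsubst (Lgen (fst pq)) (x (sl2_mult (fst pq) (snd pq))))"

definition decomp :: "(sl2 \<times> sl2) sfun \<Rightarrow> (sl2 sfun \<times> sl2 sfun) list \<Rightarrow> bool" where
  "decomp X xs = ((\<forall>(x,y)\<in>set xs. x \<in> Mcar \<and> y \<in> Mcar \<and> hom x \<and> hom y)
                  \<and> X = ssum (map (\<lambda>(x,y). tens x y) xs))"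

definition tbr :: "(sl2 sfun \<Rightarrow> sl2 sfun \<Rightarrow> sl2 sfun) \<Rightarrow> sl2 sfun \<times> sl2 sfun
                    \<Rightarrow> sl2 sfun \<times> sl2 sfun \<Rightarrow> (sl2 \<times> sl2) sfun" where
  "tbr br u v = (case u of (x,y) \<Rightarrow> case v of (z,w) \<Rightarrow>
     sscale ((-1) ^ (pdeg y * pdeg z)) (sadd (tens (br x z) (smul y w)) (tens (smul x z) (br y w))))"

definition tbrsum :: "(sl2 sfun \<Rightarrow> sl2 sfun \<Rightarrow> sl2 sfun) \<Rightarrow> (sl2 sfun \<times> sl2 sfun) list
                      \<Rightarrow> (sl2 sfun \<times> sl2 sfun) list \<Rightarrow> (sl2 \<times> sl2) sfun" where
  "tbrsum br xs zs = ssum [tbr br u v. u \<leftarrow> xs, v \<leftarrow> zs]"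

definition graded_poisson :: "(sl2 sfun \<Rightarrow> sl2 sfun \<Rightarrow> sl2 sfun) \<Rightarrow> bool" where
  "graded_poisson br =
    ((\<forall>x\<in>Mcar. \<forall>y\<in>Mcar. br x y \<in> Mcar)
   \<and> (\<forall>x\<in>Mcar. \<forall>y\<in>Mcar. \<forall>z\<in>Mcar. br (sadd x y) z = sadd (br x z) (br y z)
                                   \<and> br z (sadd x y) = sadd (br z x) (br z y))
   \<and> (\<forall>x\<in>Mcar. \<forall>y\<in>Mcar. \<forall>c. br (sscale c x) y = sscale c (br x y)
                              \<and> br x (sscale c y) = sscale c (br x y))
   \<and> (\<forall>x\<in>Mcar. \<forall>y\<in>Mcar.
        (evenp x \<and> evenp y \<longrightarrow> evenp (br x y)) \<and> (evenp x \<and> oddp y \<longrightarrow> oddp (br x y))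
      \<and> (oddp x \<and> evenp y \<longrightarrow> oddp (br x y)) \<and> (oddp x \<and> oddp y \<longrightarrow> evenp (br x y)))
   \<and> (\<forall>x\<in>Mcar. \<forall>y\<in>Mcar. hom x \<longrightarrow> hom y \<longrightarrow>
        br x y = sscale ((-1) ^ (pdeg x * pdeg y + 1)) (br y x))
   \<and> (\<forall>x\<in>Mcar. \<forall>y\<in>Mcar. \<forall>z\<in>Mcar. hom x \<longrightarrow> hom y \<longrightarrow> hom z \<longrightarrow>
        br (smul x y) z = sadd (smul x (br y z)) (sscale ((-1) ^ (pdeg y * pdeg z)) (smul (br x z) y)))
   \<and> (\<forall>x\<in>Mcar. \<forall>y\<in>Mcar. \<forall>z\<in>Mcar. hom x \<longrightarrow> hom y \<longrightarrow> hom z \<longrightarrow>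
        sadd (sscale ((-1) ^ (pdeg x * pdeg z)) (br (br x y) z))
          (sadd (sscale ((-1) ^ (pdeg y * pdeg z)) (br (br z x) y))
                (sscale ((-1) ^ (pdeg x * pdeg y)) (br (br y z) x))) = szero))"

text \<open>Restriction to A is the Sklyanin bracket (determined by its values on generators).\<close>
definition prolongs_sklyanin :: "(sl2 sfun \<Rightarrow> sl2 sfun \<Rightarrow> sl2 sfun) \<Rightarrow> bool" where
  "prolongs_sklyanin br =
    (br sa sb = sscale (-1) (smul sa sb) \<and> br sa sc = sscale (-1) (smul sa sc)
   \<and> br sb sd = sscale (-1) (smul sb sd) \<and> br sc sd = sscale (-1) (smul sc sd)
   \<and> br sc sb = szero \<and> br sa sd = sscale (-2) (smul sb sc))"

definition poisson_lie :: "(sl2 sfun \<Rightarrow> sl2 sfun \<Rightarrow> sl2 sfun) \<Rightarrow> bool" where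
  "poisson_lie br =
    ((\<forall>f\<in>Acar. \<forall>h\<in>Acar. \<forall>xs zs. decomp (DeltaR (sconst f)) xs \<longrightarrow> decomp (DeltaR (sconst h)) zs \<longrightarrow>
        DeltaR (br (sconst f) (sconst h)) = tbrsum br xs zs)
   \<and> (\<forall>i<3. \<forall>f\<in>Acar. \<forall>xs zs. decomp (DeltaL (stheta i)) xs \<longrightarrow> decomp (DeltaR (sconst f)) zs \<longrightarrow>
        DeltaL (br (stheta i) (sconst f)) = tbrsum br xs zs)
   \<and> (\<forall>i<3. \<forall>f\<in>Acar. \<forall>xs zs. decomp (DeltaR (stheta i)) xs \<longrightarrow> decomp (DeltaR (sconst f)) zs \<longrightarrow>
        DeltaR (br (stheta i) (sconst f)) = tbrsum br xs zs)
   \<and> (\<forall>i<3. \<forall>j<3. \<forall>xs zs. decomp (DeltaL (stheta i)) xs \<longrightarrow> decomp (DeltaL (stheta j)) zs \<longrightarrow>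
        DeltaL (br (stheta i) (stheta j)) = tbrsum br xs zs)
   \<and> (\<forall>i<3. \<forall>j<3. \<forall>xs zs. decomp (DeltaR (stheta i)) xs \<longrightarrow> decomp (DeltaR (stheta j)) zs \<longrightarrow>
        DeltaR (br (stheta i) (stheta j)) = tbrsum br xs zs))"

definition is_ext_deriv :: "(sl2 sfun \<Rightarrow> sl2 sfun) \<Rightarrow> bool" where
  "is_ext_deriv d =
    ((\<forall>x\<in>Mcar. d x \<in> Mcar)
   \<and> (\<forall>x\<in>Mcar. \<forall>y\<in>Mcar. d (sadd x y) = sadd (d x) (d y))
   \<and> (\<forall>x\<in>Mcar. \<forall>c. d (sscale c x) = sscale c (d x))
   \<and> (\<forall>x\<in>Mcar. \<forall>y\<in>Mcar. hom x \<longrightarrow>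
        d (smul x y) = sadd (smul (d x) y) (sscale ((-1) ^ pdeg x) (smul x (d y))))
   \<and> (\<forall>x\<in>Mcar. d (d x) = szero)
   \<and> d sa = sadd (smul (stheta 0) sa) (smul (stheta 1) sc)
   \<and> d sb = sadd (smul (stheta 0) sb) (smul (stheta 1) sd)
   \<and> d sc = sadd (smul (stheta 2) sa) (sscale (-1) (smul (stheta 0) sc))
   \<and> d sd = sadd (smul (stheta 2) sb) (sscale (-1) (smul (stheta 0) sd))
   \<and> d (stheta 0) = smul (stheta 1) (stheta 2)
   \<and> d (stheta 1) = sscale 2 (smul (stheta 0) (stheta 1))
   \<and> d (stheta 2) = sscale (-2) (smul (stheta 0) (stheta 2)))"

definition differential :: "(sl2 sfun \<Rightarrow> sl2 sfun) \<Rightarrow> (sl2 sfun \<Rightarrow> sl2 sfun \<Rightarrow> sl2 sfun) \<Rightarrow> bool" where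
  "differential d br =
    (\<forall>f\<in>Mcar. \<forall>h\<in>Mcar. hom f \<longrightarrow> hom h \<longrightarrow>
       d (br f h) = sadd (br (d f) h) (sscale ((-1) ^ pdeg f) (br f (d h))))"

end

theory Submission
  imports Defs
begin

definition ind :: "nat set \<Rightarrow> grass" where "ind A = (\<lambda>U. if U = A then 1 else 0)"
definition scal :: "complex \<Rightarrow> grass" where "scal c = (\<lambda>U. if U = {} then c else 0)"

lemma sum_single_nz:
  assumes "finite A" "a \<in> A" "\<And>x. x \<in> A \<Longrightarrow> x \<noteq> a \<Longrightarrow> f x = 0"
  shows "sum f A = f a"
proof -
  have "sum f A = f a + sum f (A - {a})" using assms by (simp add: sum.remove)
  also have "sum f (A - {a}) = 0" using assms by (intro sum.neutral) auto
  finally show ?thesis by simp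
qed

lemma gsign_empty1[simp]: "gsign {} T = 1" by (simp add: gsign_def)
lemma gsign_empty2[simp]: "gsign S {} = 1" by (simp add: gsign_def)

lemma gmul_empty: "gmul x y {} = x {} * y {}"
  by (simp add: gmul_def)

lemma gmul_single: "gmul x y {k} = x {} * y {k} + x {k} * y {}"
proof -
  have P: "Pow {k} = {{}, {k}}" by blast
  show ?thesis by (simp add: gmul_def P insert_Diff_if)
qed

lemma gmul_scal_left: "gmul (scal c) y U = (if finite U then c * y U else 0)"
proof (cases "finite U")
  case True
  have "(\<Sum>S\<in>Pow U. gsign S (U - S) * scal c S * y (U - S)) = gsign {} (U - {}) * scal c {} * y (U - {})"
    by (rule sum_single_nz) (use True in \<open>auto simp: scal_def\<close>)
  then show ?thesis using True by (simp add: gmul_def scal_def)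
qed (simp add: gmul_def)

lemma gmul_scal_right: "gmul x (scal c) U = (if finite U then x U * c else 0)"
proof (cases "finite U")
  case True
  have "(\<Sum>S\<in>Pow U. gsign S (U - S) * x S * scal c (U - S)) = gsign U (U - U) * x U * scal c (U - U)"
    by (rule sum_single_nz) (use True in \<open>auto simp: scal_def\<close>)
  then show ?thesis using True by (simp add: gmul_def scal_def)
qed (simp add: gmul_def)

lemma gmul_ind: "gmul (ind A) (ind B) U = (if finite U \<and> A \<subseteq> U \<and> U - A = B then gsign A B else 0)"
proof (cases "finite U \<and> A \<subseteq> U")
  case True
  have "(\<Sum>S\<in>Pow U. gsign S (U - S) * ind A S * ind B (U - S)) = gsign A (U - A) * ind A A * ind B (U - A)"
    by (rule sum_single_nz) (use True in \<open>auto simp: ind_def\<close>)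
  then show ?thesis using True by (auto simp: gmul_def ind_def)
next
  case False
  then show ?thesis
  proof (cases "finite U")
    case True
    then have "(\<Sum>S\<in>Pow U. gsign S (U - S) * ind A S * ind B (U - S)) = 0"
      using False by (intro sum.neutral) (auto simp: ind_def)
    then show ?thesis using False True by (simp add: gmul_def)
  qed (simp add: gmul_def)
qed

lemma gmul_zero_right: "gmul x (\<lambda>_. 0) = (\<lambda>_. 0)"
  by (simp add: gmul_def fun_eq_iff)
lemma gmul_zero_left: "gmul (\<lambda>_. 0) y = (\<lambda>_. 0)"
  by (simp add: gmul_def fun_eq_iff)

definition gev :: "grass \<Rightarrow> bool" where "gev v = (\<forall>S. odd (card S) \<longrightarrow> v S = 0)"
definition god :: "grass \<Rightarrow> bool" where "god v = (\<forall>S. even (card S) \<longrightarrow> v S = 0)"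

lemma card_diff_sub: "finite U \<Longrightarrow> S \<subseteq> U \<Longrightarrow> card (U - S) = card U - card S"
  by (simp add: card_Diff_subset finite_subset)
lemma card_sub_le: "finite U \<Longrightarrow> S \<subseteq> U \<Longrightarrow> card S \<le> card U"
  by (simp add: card_mono)

lemma gmul_par_zero:
  assumes "\<And>S. S \<subseteq> U \<Longrightarrow> x S = 0 \<or> y (U - S) = 0"
  shows "gmul x y U = 0"
  using assms by (auto simp: gmul_def intro!: sum.neutral)

lemma gmul_ee: "gev x \<Longrightarrow> gev y \<Longrightarrow> gev (gmul x y)"
  unfolding gev_def
proof (intro allI impI)
  fix U assume ex: "\<forall>S. odd (card S) \<longrightarrow> x S = 0" and ey: "\<forall>S. odd (card S) \<longrightarrow> y S = 0" and o: "odd (card (U::nat set))"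
  show "gmul x y U = 0"
  proof (cases "finite U")
    case True
    show ?thesis
    proof (rule gmul_par_zero)
      fix S assume "S \<subseteq> U"
      then have "card (U - S) = card U - card S" "card S \<le> card U" using True card_diff_sub card_sub_le by auto
      then show "x S = 0 \<or> y (U - S) = 0" using ex ey o by (cases "odd (card S)") auto
    qed
  qed (simp add: gmul_def)
qed

lemma gmul_oe: "god x \<Longrightarrow> gev y \<Longrightarrow> god (gmul x y)"
  unfolding gev_def god_def
proof (intro allI impI)
  fix U assume ex: "\<forall>S. even (card S) \<longrightarrow> x S = 0" and ey: "\<forall>S. odd (card S) \<longrightarrow> y S = 0" and o: "even (card (U::nat set))"
  show "gmul x y U = 0"
  proof (cases "finite U")
    case True
    show ?thesis
    proof (rule gmul_par_zero)
      fix S assume "S \<subseteq> U"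
      then have "card (U - S) = card U - card S" "card S \<le> card U" using True card_diff_sub card_sub_le by auto
      then show "x S = 0 \<or> y (U - S) = 0" using ex ey o by (cases "odd (card S)") auto
    qed
  qed (simp add: gmul_def)
qed

lemma gmul_eo: "gev x \<Longrightarrow> god y \<Longrightarrow> god (gmul x y)"
  unfolding gev_def god_def
proof (intro allI impI)
  fix U assume ex: "\<forall>S. odd (card S) \<longrightarrow> x S = 0" and ey: "\<forall>S. even (card S) \<longrightarrow> y S = 0" and o: "even (card (U::nat set))"
  show "gmul x y U = 0"
  proof (cases "finite U")
    case True
    show ?thesis
    proof (rule gmul_par_zero)
      fix S assume "S \<subseteq> U"
      then have "card (U - S) = card U - card S" "card S \<le> card U" using True card_diff_sub card_sub_le by auto
      then show "x S = 0 \<or> y (U - S) = 0" using ex ey o by (cases "odd (card S)") auto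
    qed
  qed (simp add: gmul_def)
qed

lemma gmul_oo: "god x \<Longrightarrow> god y \<Longrightarrow> gev (gmul x y)"
  unfolding gev_def god_def
proof (intro allI impI)
  fix U assume ex: "\<forall>S. even (card S) \<longrightarrow> x S = 0" and ey: "\<forall>S. even (card S) \<longrightarrow> y S = 0" and o: "odd (card (U::nat set))"
  show "gmul x y U = 0"
  proof (cases "finite U")
    case True
    show ?thesis
    proof (rule gmul_par_zero)
      fix S assume "S \<subseteq> U"
      then have "card (U - S) = card U - card S" "card S \<le> card U" using True card_diff_sub card_sub_le by auto
      then show "x S = 0 \<or> y (U - S) = 0" using ex ey o by (cases "odd (card S)") auto
    qed
  qed (simp add: gmul_def)
qed

lemma sconst_scal: "sconst f p = scal (f p)" by (simp add: sconst_def scal_def fun_eq_iff)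
lemma stheta_ind: "stheta i p = ind {i}" by (simp add: stheta_def ind_def fun_eq_iff)

lemma Mcar_out: "x \<in> Mcar \<Longrightarrow> \<not> S \<subseteq> {0,1,2} \<Longrightarrow> x p S = 0"
  unfolding Mcar_def by (metis (mono_tags, lifting) mem_Collect_eq)
lemma Mcar_comp: "x \<in> Mcar \<Longrightarrow> S \<subseteq> {0,1,2} \<Longrightarrow> (\<lambda>p. x p S) \<in> Acar"
  unfolding Mcar_def by (metis (mono_tags, lifting) mem_Collect_eq)
lemma Mcar_I: "(\<And>S. S \<subseteq> {0,1,2} \<Longrightarrow> (\<lambda>p. x p S) \<in> Acar) \<Longrightarrow> (\<And>S p. \<not> S \<subseteq> {0,1,2} \<Longrightarrow> x p S = 0) \<Longrightarrow> x \<in> Mcar"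
  unfolding Mcar_def by auto
lemma Mcar_fin: "x \<in> Mcar \<Longrightarrow> \<not> finite S \<Longrightarrow> x p S = 0"
  by (metis Mcar_out finite.emptyI finite.insertI finite_subset)

lemma Acar_const[simp,intro]: "(\<lambda>_. c) \<in> Acar" unfolding Acar_def by (rule pf_const)
lemma Acar_add[intro]: "f \<in> Acar \<Longrightarrow> g \<in> Acar \<Longrightarrow> (\<lambda>x. f x + g x) \<in> Acar" unfolding Acar_def by (rule pf_add)
lemma Acar_mult[intro]: "f \<in> Acar \<Longrightarrow> g \<in> Acar \<Longrightarrow> (\<lambda>x. f x * g x) \<in> Acar" unfolding Acar_def by (rule pf_mult)
lemma Acar_gens[simp,intro]: "ca \<in> Acar" "cb \<in> Acar" "cc \<in> Acar" "cd \<in> Acar" unfolding Acar_def by (auto intro: pf_coord)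
lemma Acar_sum: "finite I \<Longrightarrow> (\<And>i. i \<in> I \<Longrightarrow> f i \<in> Acar) \<Longrightarrow> (\<lambda>p. \<Sum>i\<in>I. f i p) \<in> Acar"
proof (induction I rule: finite_induct)
  case empty then show ?case by simp
next
  case (insert a F) then show ?case by (simp add: Acar_add)
qed
lemma Acar_scale[intro]: "f \<in> Acar \<Longrightarrow> (\<lambda>x. c * f x) \<in> Acar"
  using Acar_mult[OF Acar_const, of f c] by simp

lemma sconst_Mcar: "f \<in> Acar \<Longrightarrow> sconst f \<in> Mcar"
  by (rule Mcar_I) (case_tac "S = {}", auto simp: sconst_def)
lemma stheta_Mcar: "i < 3 \<Longrightarrow> stheta i \<in> Mcar"
  by (rule Mcar_I) (auto simp: stheta_def eval_nat_numeral less_Suc_eq)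
lemma szero_Mcar: "szero \<in> Mcar"
  by (rule Mcar_I) (auto simp: szero_def)
lemma sadd_Mcar: "x \<in> Mcar \<Longrightarrow> y \<in> Mcar \<Longrightarrow> sadd x y \<in> Mcar"
  by (rule Mcar_I) (auto simp: sadd_def Mcar_out Mcar_comp Acar_add)
lemma sscale_Mcar: "x \<in> Mcar \<Longrightarrow> sscale c x \<in> Mcar"
  by (rule Mcar_I) (auto simp: sscale_def Mcar_out Mcar_comp Acar_scale)
lemma smul_Mcar: assumes "x \<in> Mcar" "y \<in> Mcar" shows "smul x y \<in> Mcar"
proof (rule Mcar_I)
  fix S :: "nat set" assume S: "S \<subseteq> {0,1,2}"
  then have fS: "finite S" by (meson finite.emptyI finite.insertI finite_subset)
  have "(\<lambda>p. smul x y p S) = (\<lambda>p. \<Sum>T\<in>Pow S. gsign T (S - T) * x p T * y p (S - T))"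
    using fS by (simp add: smul_def gmul_def)
  also have "\<dots> \<in> Acar"
  proof (rule Acar_sum)
    fix T assume "T \<in> Pow S"
    then have "T \<subseteq> {0,1,2}" "S - T \<subseteq> {0,1,2}" using S by auto
    then have "(\<lambda>p. x p T) \<in> Acar" "(\<lambda>p. y p (S - T)) \<in> Acar" using assms Mcar_comp by auto
    then show "(\<lambda>p. gsign T (S - T) * x p T * y p (S - T)) \<in> Acar"
      using Acar_mult[OF Acar_scale] by (simp add: mult.assoc)
  qed (simp add: fS)
  finally show "(\<lambda>p. smul x y p S) \<in> Acar" .
next
  fix S :: "nat set" and p assume S: "\<not> S \<subseteq> {0,1,2}"
  show "smul x y p S = 0" unfolding smul_def
  proof (rule gmul_par_zero)
    fix T assume "T \<subseteq> S"
    then have "\<not> T \<subseteq> {0,1,2} \<or> \<not> S - T \<subseteq> {0,1,2}" using S by auto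
    then show "x p T = 0 \<or> y p (S - T) = 0" using assms Mcar_out by blast
  qed
qed

lemma evenp_gev: "evenp x = (\<forall>p. gev (x p))" by (simp add: evenp_def gev_def)
lemma oddp_god: "oddp x = (\<forall>p. god (x p))" by (simp add: oddp_def god_def)
lemma evenp_sconst[simp]: "evenp (sconst f)" by (simp add: evenp_def sconst_def)
lemma oddp_stheta[simp]: "oddp (stheta i)" by (simp add: oddp_def stheta_def)
lemma evenp_smul_ee: "evenp x \<Longrightarrow> evenp y \<Longrightarrow> evenp (smul x y)" by (simp add: evenp_gev smul_def gmul_ee)
lemma oddp_smul_oe: "oddp x \<Longrightarrow> evenp y \<Longrightarrow> oddp (smul x y)" by (simp add: evenp_gev oddp_god smul_def gmul_oe)
lemma oddp_smul_eo: "evenp x \<Longrightarrow> oddp y \<Longrightarrow> oddp (smul x y)" by (simp add: evenp_gev oddp_god smul_def gmul_eo)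
lemma evenp_smul_oo: "oddp x \<Longrightarrow> oddp y \<Longrightarrow> evenp (smul x y)" by (simp add: evenp_gev oddp_god smul_def gmul_oo)
lemma pdeg_even: "evenp x \<Longrightarrow> pdeg x = 0" by (simp add: pdeg_def)
lemma hom_sconst[simp]: "hom (sconst f)" by (simp add: hom_def)
lemma hom_stheta[simp]: "hom (stheta i)" by (simp add: hom_def)
lemma pdeg_sconst[simp]: "pdeg (sconst f) = 0" by (simp add: pdeg_def)

lemma sconst_mult: "smul (sconst f) (sconst g) = sconst (\<lambda>p. f p * g p)"
  unfolding smul_def sconst_scal by (simp add: fun_eq_iff gmul_scal_left) (auto simp: scal_def)
lemma sconst_add: "sadd (sconst f) (sconst g) = sconst (\<lambda>p. f p + g p)"
  by (auto simp: fun_eq_iff sadd_def sconst_def)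
lemma sconst_scale: "sscale c (sconst f) = sconst (\<lambda>p. c * f p)"
  by (auto simp: fun_eq_iff sscale_def sconst_def)
lemma smul_sconst_left: "x \<in> Mcar \<Longrightarrow> smul (sconst f) x = (\<lambda>p U. f p * x p U)"
  by (auto simp: fun_eq_iff smul_def sconst_scal gmul_scal_left Mcar_fin)
lemma smul_sconst_right: "x \<in> Mcar \<Longrightarrow> smul x (sconst f) = (\<lambda>p U. x p U * f p)"
  by (auto simp: fun_eq_iff smul_def sconst_scal gmul_scal_right Mcar_fin)

lemma Rep_sl2_coords: "Rep_sl2 g = (ca g, cb g, cc g, cd g)"
  by (simp add: ca_def cb_def cc_def cd_def split: prod.splits)
lemma sl2_det: "ca g * cd g - cb g * cc g = 1"
  using Rep_sl2[of g] by (simp add: Rep_sl2_coords)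
lemma Abs_coords:
  assumes "a * d - b * c = 1"
  shows "ca (Abs_sl2 (a,b,c,d)) = a" "cb (Abs_sl2 (a,b,c,d)) = b" "cc (Abs_sl2 (a,b,c,d)) = c" "cd (Abs_sl2 (a,b,c,d)) = d"
  using Abs_sl2_inverse[of "(a,b,c,d)"] assms by (auto simp: ca_def cb_def cc_def cd_def)
lemma Abs_Rep_coords: "Abs_sl2 (ca g, cb g, cc g, cd g) = g"
  by (metis Rep_sl2_coords Rep_sl2_inverse)

definition e1 :: sl2 where "e1 = Abs_sl2 (1,0,0,1)"
lemma e1_coords[simp]: "ca e1 = 1" "cb e1 = 0" "cc e1 = 0" "cd e1 = 1"
  unfolding e1_def by (simp_all add: Abs_coords)
lemma mult_e1: "sl2_mult e1 g = g" "sl2_mult g e1 = g"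
  by (simp_all add: sl2_mult_def Abs_Rep_coords)
lemma mult_coords:
  "ca (sl2_mult p q) = ca p * ca q + cb p * cc q"
  "cb (sl2_mult p q) = ca p * cb q + cb p * cd q"
  "cc (sl2_mult p q) = cc p * ca q + cd p * cc q"
  "cd (sl2_mult p q) = cc p * cb q + cd p * cd q"
proof -
  have "(ca p * ca q + cb p * cc q) * (cc p * cb q + cd p * cd q) - (ca p * cb q + cb p * cd q) * (cc p * ca q + cd p * cc q)
        = (ca p * cd p - cb p * cc p) * (ca q * cd q - cb q * cc q)" by (simp add: algebra_simps)
  then have "(ca p * ca q + cb p * cc q) * (cc p * cb q + cd p * cd q) - (ca p * cb q + cb p * cd q) * (cc p * ca q + cd p * cc q) = 1"
    by (simp add: sl2_det)
  note A = Abs_coords[OF this]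
  show "ca (sl2_mult p q) = ca p * ca q + cb p * cc q" "cb (sl2_mult p q) = ca p * cb q + cb p * cd q"
    "cc (sl2_mult p q) = cc p * ca q + cd p * cc q" "cd (sl2_mult p q) = cc p * cb q + cd p * cd q"
    using A by (simp_all add: sl2_mult_def)
qed

section \<open>Graded Poisson brackets\<close>

locale GP = fixes br :: "sl2 sfun \<Rightarrow> sl2 sfun \<Rightarrow> sl2 sfun" assumes gp: "graded_poisson br"
begin

lemma br_Mcar: "x \<in> Mcar \<Longrightarrow> y \<in> Mcar \<Longrightarrow> br x y \<in> Mcar"
  using gp unfolding graded_poisson_def by blast
lemma br_addl: "x \<in> Mcar \<Longrightarrow> y \<in> Mcar \<Longrightarrow> z \<in> Mcar \<Longrightarrow> br (sadd x y) z = sadd (br x z) (br y z)"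
  using gp unfolding graded_poisson_def by blast
lemma br_addr: "x \<in> Mcar \<Longrightarrow> y \<in> Mcar \<Longrightarrow> z \<in> Mcar \<Longrightarrow> br z (sadd x y) = sadd (br z x) (br z y)"
  using gp unfolding graded_poisson_def by blast
lemma br_scl: "x \<in> Mcar \<Longrightarrow> y \<in> Mcar \<Longrightarrow> br (sscale c x) y = sscale c (br x y)"
  using gp unfolding graded_poisson_def by blast
lemma br_scr: "x \<in> Mcar \<Longrightarrow> y \<in> Mcar \<Longrightarrow> br x (sscale c y) = sscale c (br x y)"
  using gp unfolding graded_poisson_def by blast
lemma br_ee: "x \<in> Mcar \<Longrightarrow> y \<in> Mcar \<Longrightarrow> evenp x \<Longrightarrow> evenp y \<Longrightarrow> evenp (br x y)"
  using gp unfolding graded_poisson_def by blast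
lemma br_eo: "x \<in> Mcar \<Longrightarrow> y \<in> Mcar \<Longrightarrow> evenp x \<Longrightarrow> oddp y \<Longrightarrow> oddp (br x y)"
  using gp unfolding graded_poisson_def by blast
lemma br_oe: "x \<in> Mcar \<Longrightarrow> y \<in> Mcar \<Longrightarrow> oddp x \<Longrightarrow> evenp y \<Longrightarrow> oddp (br x y)"
  using gp unfolding graded_poisson_def by blast
lemma br_oo: "x \<in> Mcar \<Longrightarrow> y \<in> Mcar \<Longrightarrow> oddp x \<Longrightarrow> oddp y \<Longrightarrow> evenp (br x y)"
  using gp unfolding graded_poisson_def by blast
lemma br_sym: "x \<in> Mcar \<Longrightarrow> y \<in> Mcar \<Longrightarrow> hom x \<Longrightarrow> hom y \<Longrightarrow> br x y = sscale ((-1) ^ (pdeg x * pdeg y + 1)) (br y x)"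
  using gp unfolding graded_poisson_def by blast
lemma br_leib: "x \<in> Mcar \<Longrightarrow> y \<in> Mcar \<Longrightarrow> z \<in> Mcar \<Longrightarrow> hom x \<Longrightarrow> hom y \<Longrightarrow> hom z \<Longrightarrow>
        br (smul x y) z = sadd (smul x (br y z)) (sscale ((-1) ^ (pdeg y * pdeg z)) (smul (br x z) y))"
  using gp unfolding graded_poisson_def by blast
lemma br_jac: "x \<in> Mcar \<Longrightarrow> y \<in> Mcar \<Longrightarrow> z \<in> Mcar \<Longrightarrow> hom x \<Longrightarrow> hom y \<Longrightarrow> hom z \<Longrightarrow>
        sadd (sscale ((-1) ^ (pdeg x * pdeg z)) (br (br x y) z))
          (sadd (sscale ((-1) ^ (pdeg y * pdeg z)) (br (br z x) y))
                (sscale ((-1) ^ (pdeg x * pdeg y)) (br (br y z) x))) = szero"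
  using gp unfolding graded_poisson_def by blast

lemma br_even_left: "x \<in> Mcar \<Longrightarrow> y \<in> Mcar \<Longrightarrow> evenp x \<Longrightarrow> hom y \<Longrightarrow> br x y = sscale (-1) (br y x)"
  using br_sym[of x y] by (simp add: pdeg_even hom_def)
lemma br_even_right: "x \<in> Mcar \<Longrightarrow> y \<in> Mcar \<Longrightarrow> hom x \<Longrightarrow> evenp y \<Longrightarrow> br x y = sscale (-1) (br y x)"
  using br_sym[of x y] by (simp add: pdeg_even hom_def)

lemma br_self_even: assumes "x \<in> Mcar" "evenp x" shows "br x x = szero"
proof -
  have "br x x = sscale (-1) (br x x)" using br_even_left[OF assms(1) assms(1) assms(2)] assms by (simp add: hom_def)
  then have "\<And>p S. br x x p S = - br x x p S" by (metis (no_types) sscale_def mult_minus1)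
  then show ?thesis by (auto simp: szero_def fun_eq_iff)
qed

abbreviation one :: "sl2 sfun" where "one \<equiv> sconst (\<lambda>_. 1)"

lemma one_Mcar: "one \<in> Mcar" by (rule sconst_Mcar) simp

lemma br_one: assumes "z \<in> Mcar" "hom z" shows "br one z = szero"
proof -
  have m: "smul one one = one" by (simp add: sconst_mult)
  have B: "br one z \<in> Mcar" using br_Mcar one_Mcar assms by blast
  have "br one z = br (smul one one) z" by (simp add: m)
  also have "\<dots> = sadd (smul one (br one z)) (sscale 1 (smul (br one z) one))"
    using br_leib[OF one_Mcar one_Mcar assms(1)] assms by simp
  also have "\<dots> = sadd (br one z) (br one z)"
    using B by (simp add: smul_sconst_left smul_sconst_right sscale_def)
  finally have "\<And>p S. br one z p S = br one z p S + br one z p S" by (metis sadd_def)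
  then show ?thesis by (auto simp: szero_def fun_eq_iff)
qed

lemma br_const: assumes "z \<in> Mcar" "hom z" shows "br (sconst (\<lambda>_. c)) z = szero"
proof -
  have "sconst (\<lambda>_. c) = sscale c one" by (simp add: sconst_scale)
  then show ?thesis using br_scl[OF one_Mcar assms(1)] br_one[OF assms] by (simp add: sscale_def szero_def)
qed

end



declare One_nat_def[simp del]

lemma ssum_Mcar: "(\<And>x. x \<in> set xs \<Longrightarrow> x \<in> Mcar) \<Longrightarrow> ssum xs \<in> Mcar"
  by (induction xs) (auto simp: ssum_def szero_Mcar sadd_Mcar)

lemma ssum_eval: "ssum xs p U = sum_list (map (\<lambda>x. x p U) xs)"
  by (induction xs) (auto simp: ssum_def sadd_def szero_def)

locale GPS = GP + assumes sk: "prolongs_sklyanin br"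
begin

lemma sk_ab: "br sa sb = sscale (-1) (smul sa sb)" using sk by (simp add: prolongs_sklyanin_def)
lemma sk_ac: "br sa sc = sscale (-1) (smul sa sc)" using sk by (simp add: prolongs_sklyanin_def)
lemma sk_bd: "br sb sd = sscale (-1) (smul sb sd)" using sk by (simp add: prolongs_sklyanin_def)
lemma sk_cd: "br sc sd = sscale (-1) (smul sc sd)" using sk by (simp add: prolongs_sklyanin_def)
lemma sk_cb: "br sc sb = szero" using sk by (simp add: prolongs_sklyanin_def)
lemma sk_ad: "br sa sd = sscale (-2) (smul sb sc)" using sk by (simp add: prolongs_sklyanin_def)

lemmas gensM = sconst_Mcar[OF Acar_gens(1)] sconst_Mcar[OF Acar_gens(2)] sconst_Mcar[OF Acar_gens(3)] sconst_Mcar[OF Acar_gens(4)]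

lemma anti_gen: "x \<in> {sa,sb,sc,sd} \<Longrightarrow> y \<in> {sa,sb,sc,sd} \<Longrightarrow> br x y = sscale (-1) (br y x)"
proof -
  assume "x \<in> {sa,sb,sc,sd}" "y \<in> {sa,sb,sc,sd}"
  then have "x \<in> Mcar" "y \<in> Mcar" "evenp x" "hom y" using gensM by auto
  then show ?thesis by (rule br_even_left)
qed

lemma sk_ba: "br sb sa = smul sa sb" using anti_gen[of sb sa] sk_ab by (simp add: sscale_def)
lemma sk_ca: "br sc sa = smul sa sc" using anti_gen[of sc sa] sk_ac by (simp add: sscale_def)
lemma sk_db: "br sd sb = smul sb sd" using anti_gen[of sd sb] sk_bd by (simp add: sscale_def)
lemma sk_dc: "br sd sc = smul sc sd" using anti_gen[of sd sc] sk_cd by (simp add: sscale_def)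
lemma sk_bc: "br sb sc = szero" using anti_gen[of sb sc] sk_cb by (simp add: sscale_def szero_def)
lemma sk_da: "br sd sa = sscale 2 (smul sb sc)" using anti_gen[of sd sa] sk_ad by (simp add: sscale_def)
lemma sk_aa: "br sa sa = szero" using br_self_even gensM by simp
lemma sk_bb: "br sb sb = szero" using br_self_even gensM by simp
lemma sk_cc: "br sc sc = szero" using br_self_even gensM by simp
lemma sk_dd: "br sd sd = szero" using br_self_even gensM by simp

lemma br_A_e1:
  assumes z: "z \<in> Mcar" "hom z"
    and g: "br sa z e1 = (\<lambda>_. 0)" "br sb z e1 = (\<lambda>_. 0)" "br sc z e1 = (\<lambda>_. 0)" "br sd z e1 = (\<lambda>_. 0)"
    and F: "F \<in> Acar"
  shows "br (sconst F) z e1 = (\<lambda>_. 0)"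
  using F unfolding Acar_def
proof (induction F rule: polyfun.induct)
  case (pf_const c) then show ?case using br_const[OF z] by (simp add: szero_def)
next
  case (pf_coord f) then show ?case using g by auto
next
  case (pf_add f h)
  then have "f \<in> Acar" "h \<in> Acar" by (simp_all add: Acar_def)
  then have "br (sconst (\<lambda>x. f x + h x)) z = sadd (br (sconst f) z) (br (sconst h) z)"
    using br_addl[OF sconst_Mcar sconst_Mcar z(1)] by (simp add: sconst_add[symmetric])
  then show ?case using pf_add by (simp add: sadd_def)
next
  case (pf_mult f h)
  then have fh: "f \<in> Acar" "h \<in> Acar" by (simp_all add: Acar_def)
  then have "br (sconst (\<lambda>x. f x * h x)) z = sadd (smul (sconst f) (br (sconst h) z)) (sscale 1 (smul (br (sconst f) z) (sconst h)))"
    using br_leib[OF sconst_Mcar sconst_Mcar z(1)] z by (simp add: sconst_mult[symmetric])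
  then show ?case using pf_mult by (simp add: sadd_def sscale_def smul_def gmul_zero_left gmul_zero_right)
qed

lemma sconst_e1_zero: "f e1 = 0 \<Longrightarrow> sconst f e1 = (\<lambda>_. 0)" by (simp add: sconst_def fun_eq_iff)

lemma zero_e1: "szero e1 = (\<lambda>_. 0)" by (simp add: szero_def)
lemma sc_e1: "f e1 = 0 \<Longrightarrow> sscale c (sconst f) e1 = (\<lambda>_. 0)" by (simp add: sscale_def sconst_def fun_eq_iff)

lemma brA_a: "F \<in> Acar \<Longrightarrow> br (sconst F) sa e1 = (\<lambda>_. 0)"
  apply (rule br_A_e1)
  using gensM apply simp_all
  apply (simp_all only: sk_aa sk_ba sk_ca sk_da zero_e1 sconst_mult sconst_scale)
  by (simp_all add: sconst_def fun_eq_iff)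

lemma brA_b: "F \<in> Acar \<Longrightarrow> br (sconst F) sb e1 = (\<lambda>_. 0)"
  apply (rule br_A_e1)
  using gensM apply simp_all
  apply (simp_all only: sk_ab sk_bb sk_cb sk_db zero_e1 sconst_mult sconst_scale)
  by (simp_all add: sconst_def fun_eq_iff)


lemma br_szero_l: "z \<in> Mcar \<Longrightarrow> br szero z = szero"
proof -
  assume z: "z \<in> Mcar"
  have "szero = sscale 0 szero" by (simp add: sscale_def szero_def)
  then have "br szero z = sscale 0 (br szero z)" using br_scl[OF szero_Mcar z, of 0] by metis
  then show ?thesis by (simp add: sscale_def szero_def fun_eq_iff)
qed


lemma br_ssum_l: "(\<And>x. x \<in> set xs \<Longrightarrow> x \<in> Mcar) \<Longrightarrow> z \<in> Mcar \<Longrightarrow> br (ssum xs) z = ssum (map (\<lambda>x. br x z) xs)"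
proof (induction xs)
  case Nil then show ?case by (simp add: ssum_def br_szero_l)
next
  case (Cons a xs)
  have "ssum (a # xs) = sadd a (ssum xs)" by (simp add: ssum_def)
  moreover have "ssum xs \<in> Mcar" using Cons.prems by (intro ssum_Mcar) auto
  ultimately have "br (ssum (a # xs)) z = sadd (br a z) (br (ssum xs) z)" using br_addl Cons.prems by simp
  then show ?case using Cons by (simp add: ssum_def)
qed


end

definition mon :: "nat set \<Rightarrow> sl2 sfun" where
  "mon S = (if S = {0} then stheta 0 else if S = {1} then stheta 1 else if S = {2} then stheta 2
     else if S = {0,1} then smul (stheta 0) (stheta 1) else if S = {0,2} then smul (stheta 0) (stheta 2)
     else if S = {1,2} then smul (stheta 1) (stheta 2) else if S = {0,1,2} then smul (stheta 0) (smul (stheta 1) (stheta 2))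
     else sconst (\<lambda>_. 1))"

definition SL :: "nat set list" where "SL = [{}, {0},{1},{2},{0,1},{0,2},{1,2},{0,1,2}]"

lemma set_SL: "set SL = Pow {0,1,2}"
  by (auto simp: SL_def Pow_insert)

lemma distinct_SL: "distinct SL" by (simp add: SL_def insert_eq_iff)

lemma gsign_ord: "(\<And>s t. s \<in> S \<Longrightarrow> t \<in> T \<Longrightarrow> s < t) \<Longrightarrow> gsign S T = 1"
proof -
  assume a: "\<And>s t. s \<in> S \<Longrightarrow> t \<in> T \<Longrightarrow> s < t"
  have eq: "{(s,t). s \<in> S \<and> t \<in> T \<and> t < s} = {}" using a by (auto dest: less_asym)
  show ?thesis unfolding gsign_def eq by simp
qed

lemma gsign_01[simp]: "gsign {0} {1} = 1" "gsign {0} {2} = 1" "gsign {1} {2} = 1" "gsign {0} {1,2} = 1"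
  by (auto intro: gsign_ord)

lemma gmul_ind_single:
  assumes "k \<notin> B" "finite B"
  shows "gmul (ind {k}) (ind B) = (\<lambda>U. if U = insert k B then gsign {k} B else 0)"
proof
  fix U
  have "(finite U \<and> {k} \<subseteq> U \<and> U - {k} = B) = (U = insert k B)"
  proof
    assume "finite U \<and> {k} \<subseteq> U \<and> U - {k} = B"
    then show "U = insert k B" by blast
  next
    assume "U = insert k B"
    then show "finite U \<and> {k} \<subseteq> U \<and> U - {k} = B" using assms by auto
  qed
  then show "gmul (ind {k}) (ind B) U = (if U = insert k B then gsign {k} B else 0)"
    by (simp only: gmul_ind)
qed

lemma gmul_ind_lt:
  assumes "\<And>t. t \<in> B \<Longrightarrow> k < t" "finite B"
  shows "gmul (ind {k}) (ind B) = ind (insert k B)"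
proof -
  have k: "k \<notin> B" using assms(1) by blast
  have g: "gsign {k} B = 1" using assms(1) by (intro gsign_ord) auto
  show ?thesis unfolding gmul_ind_single[OF k assms(2)] g by (simp add: ind_def)
qed

lemma ind_01: "gmul (ind {0}) (ind {1}) = ind {0,1}"
  by (rule gmul_ind_lt) auto
lemma ind_02: "gmul (ind {0}) (ind {2}) = ind {0,2}"
  by (rule gmul_ind_lt) auto
lemma ind_12: "gmul (ind {1}) (ind {2}) = ind {1,2}"
  by (rule gmul_ind_lt) auto
lemma ind_012: "gmul (ind {0}) (ind {1,2}) = ind {0,1,2}"
  by (rule gmul_ind_lt) auto

lemmas ind_Suc = ind_01[simplified] ind_12[simplified] ind_012[simplified]

lemma ind_empty: "ind {} = scal 1" by (simp add: ind_def scal_def fun_eq_iff)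

lemma mono_simps:
  "mon {} = sconst (\<lambda>_. 1)" "mon {0} = stheta 0" "mon {1} = stheta 1" "mon {2} = stheta 2"
  "mon {0,1} = smul (stheta 0) (stheta 1)" "mon {0,2} = smul (stheta 0) (stheta 2)"
  "mon {1,2} = smul (stheta 1) (stheta 2)" "mon {0,1,2} = smul (stheta 0) (smul (stheta 1) (stheta 2))"
  by (simp_all add: mon_def insert_eq_iff)

lemma SL_cases: "S \<in> set SL \<Longrightarrow> S = {} \<or> S = {0} \<or> S = {1} \<or> S = {2} \<or> S = {0,1} \<or> S = {0,2} \<or> S = {1,2} \<or> S = {0,1,2}"
  by (simp add: SL_def)

lemma smul_stheta2: "smul (stheta 0) (smul (stheta 1) (stheta 2)) p = ind {0,1,2}"
  by (simp only: smul_def stheta_ind ind_12 ind_012)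

lemma mon_eval: "S \<in> set SL \<Longrightarrow> mon S p = ind S"
  apply (drule SL_cases)
  apply (elim disjE; simp only: mono_simps smul_stheta2)
  by (simp_all add: smul_def stheta_ind ind_01 ind_02 ind_12 ind_Suc sconst_scal ind_empty)

lemma mon_Mcar: "S \<in> set SL \<Longrightarrow> mon S \<in> Mcar"
  apply (drule SL_cases)
  by (elim disjE; simp only: mono_simps; intro smul_Mcar stheta_Mcar sconst_Mcar; simp)

lemma mon_hom: "S \<in> set SL \<Longrightarrow> hom (mon S)"
  apply (drule SL_cases)
  by (elim disjE; simp only: mono_simps hom_def; simp add: oddp_smul_oe evenp_smul_oo)

lemma decomp_M:
  assumes x: "x \<in> Mcar"
  shows "x = ssum (map (\<lambda>S. smul (mon S) (sconst (\<lambda>p. x p S))) SL)"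
proof (intro ext)
  fix p U
  have "ssum (map (\<lambda>S. smul (mon S) (sconst (\<lambda>p. x p S))) SL) p U = (\<Sum>S\<leftarrow>SL. mon S p U * x p S)"
    by (simp add: ssum_eval comp_def smul_sconst_right mon_Mcar cong: map_cong)
  also have "\<dots> = (\<Sum>S\<in>set SL. mon S p U * x p S)"
    using distinct_SL by (simp add: sum_list_distinct_conv_sum_set)
  also have "\<dots> = (\<Sum>S\<in>set SL. (if U = S then x p S else 0))"
    by (intro sum.cong) (auto simp: mon_eval ind_def)
  also have "\<dots> = (if U \<in> set SL then x p U else 0)"
    by (simp only: sum.delta' finite_set)
  also have "\<dots> = x p U"
    using Mcar_out[OF x, of U p] by (auto simp: set_SL)
  finally show "x p U = ssum (map (\<lambda>S. smul (mon S) (sconst (\<lambda>p. x p S))) SL) p U" by simp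
qed


context GPS begin

lemma oddp_zero_empty: "oddp y \<Longrightarrow> y p {} = 0" by (simp add: oddp_def)

lemma ind_single_ne: "ind {k} {} = 0" "ind {k,l} {} = 0" "ind {k,l} {j} = 0 \<or> k = l"
  by (auto simp: ind_def)

lemma br_pair_e1:
  assumes z: "z \<in> Mcar" "evenp z" and kl: "k < 3" "l < 3" and U: "U = {} \<or> U = {j}"
  shows "br (smul (stheta k) (stheta l)) z e1 U = 0"
proof -
  have tk: "stheta k \<in> Mcar" "stheta l \<in> Mcar" using kl stheta_Mcar by auto
  have hz: "hom z" using z by (simp add: hom_def)
  have ol: "oddp (br (stheta l) z)" "oddp (br (stheta k) z)" using br_oe tk z by auto
  note L = br_leib[OF tk z(1) hom_stheta hom_stheta hz]
  show ?thesis unfolding L using U oddp_zero_empty[OF ol(1)] oddp_zero_empty[OF ol(2)]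
    by (auto simp: sadd_def sscale_def smul_def stheta_ind gmul_empty gmul_single ind_def)
qed

lemma br_triple_e1:
  assumes z: "z \<in> Mcar" "evenp z"
  shows "br (smul (stheta 0) (smul (stheta 1) (stheta 2))) z e1 {j} = 0"
proof -
  have tk: "stheta 0 \<in> Mcar" "smul (stheta 1) (stheta 2) \<in> Mcar" using stheta_Mcar smul_Mcar by auto
  have hz: "hom z" using z by (simp add: hom_def)
  have h12: "hom (smul (stheta 1) (stheta 2))" by (simp add: hom_def evenp_smul_oo)
  have ol: "oddp (br (stheta 0) z)" using br_oe stheta_Mcar z by auto
  have p: "br (smul (stheta 1) (stheta 2)) z e1 {} = 0" using br_pair_e1[OF z, of 1 2 "{}"] by simp
  note L = br_leib[OF tk z(1) hom_stheta h12 hz]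
  show ?thesis unfolding L using p oddp_zero_empty[OF ol]
    by (auto simp: sadd_def sscale_def smul_def stheta_ind gmul_empty gmul_single ind_def ind_12 ind_Suc)
qed

lemma br_at_e1:
  assumes x: "x \<in> Mcar" and z: "z \<in> Mcar" "evenp z" and zA: "\<And>F. F \<in> Acar \<Longrightarrow> br (sconst F) z e1 = (\<lambda>_. 0)"
  shows "br x z e1 {j} = x e1 {0} * br (stheta 0) z e1 {j} + x e1 {1} * br (stheta 1) z e1 {j} + x e1 {2} * br (stheta 2) z e1 {j}"
proof -
  have hz: "hom z" using z by (simp add: hom_def)
  have memS: "\<And>S. S \<in> set SL \<Longrightarrow> smul (mon S) (sconst (\<lambda>p. x p S)) \<in> Mcar"
    using mon_Mcar sconst_Mcar Mcar_comp[OF x] by (auto simp: set_SL intro!: smul_Mcar)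
  have "br x z = br (ssum (map (\<lambda>S. smul (mon S) (sconst (\<lambda>p. x p S))) SL)) z"
    using decomp_M[OF x] by simp
  also have "\<dots> = ssum (map (\<lambda>y. br y z) (map (\<lambda>S. smul (mon S) (sconst (\<lambda>p. x p S))) SL))"
    using memS z by (intro br_ssum_l) auto
  finally have "br x z e1 {j} = (\<Sum>S\<leftarrow>SL. br (smul (mon S) (sconst (\<lambda>p. x p S))) z e1 {j})"
    by (simp add: ssum_eval comp_def)
  also have "\<dots> = (\<Sum>S\<leftarrow>SL. br (mon S) z e1 {j} * x e1 S)"
  proof (intro arg_cong[where f = sum_list] map_cong refl)
    fix S assume S: "S \<in> set SL"
    have xs: "sconst (\<lambda>p. x p S) \<in> Mcar" using S Mcar_comp[OF x] sconst_Mcar by (auto simp: set_SL)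
    note L2 = br_leib[OF mon_Mcar[OF S] xs z(1) mon_hom[OF S] hom_sconst hz]
    have "br (sconst (\<lambda>p. x p S)) z e1 = (\<lambda>_. 0)" using zA Mcar_comp[OF x] S by (auto simp: set_SL)
    then show "br (smul (mon S) (sconst (\<lambda>p. x p S))) z e1 {j} = br (mon S) z e1 {j} * x e1 S"
      unfolding L2 by (simp add: sadd_def sscale_def smul_def gmul_zero_right sconst_scal gmul_scal_right)
  qed
  also have "\<dots> = x e1 {0} * br (stheta 0) z e1 {j} + x e1 {1} * br (stheta 1) z e1 {j} + x e1 {2} * br (stheta 2) z e1 {j}"
    using br_pair_e1[OF z, of 0 1 "{j}" j] br_pair_e1[OF z, of 0 2 "{j}" j] br_pair_e1[OF z, of 1 2 "{j}" j]
      br_triple_e1[OF z, of j] br_one[OF z(1) hz]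
    by (simp add: SL_def mono_simps szero_def)
  finally show ?thesis .
qed

end



lemma gone_scal: "gone = scal 1" by (simp add: gone_def scal_def)

lemma gshift_scal: "gshift (scal c) = scal c"
proof
  fix U :: "nat set"
  show "gshift (scal c) U = scal c U"
    by (cases "U = {}") (auto simp: gshift_def scal_def)
qed

lemma gshift_zero: "gshift (\<lambda>_. 0) = (\<lambda>_. 0)" by (simp add: gshift_def fun_eq_iff)

lemma gshift_ind: "gshift (ind {j}) = ind {j+3}"
proof
  fix U :: "nat set"
  show "gshift (ind {j}) U = ind {j+3} U"
  proof (cases "U = {j+3}")
    case True then show ?thesis by (simp add: gshift_def ind_def)
  next
    case False
    have "\<not> ((\<forall>s\<in>U. 3 \<le> s) \<and> (\<lambda>s. s - 3) ` U = {j})"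
    proof
      assume a: "(\<forall>s\<in>U. 3 \<le> s) \<and> (\<lambda>s. s - 3) ` U = {j}"
      have "\<And>s. s \<in> U \<Longrightarrow> s = j + 3"
      proof -
        fix s assume s: "s \<in> U"
        then have "s - 3 \<in> (\<lambda>s. s - 3) ` U" by blast
        then have "s - 3 = j" using a by simp
        moreover have "3 \<le> s" using a s by blast
        ultimately show "s = j + 3" by arith
      qed
      moreover have "U \<noteq> {}" using a by auto
      ultimately show False using False by blast
    qed
    then show ?thesis using False by (auto simp: gshift_def ind_def)
  qed
qed

lemma gshift_single: "gshift v {m+3} = v {m}" "gshift v {} = v {}"
  by (simp_all add: gshift_def)

lemma gprod_single: "gprod [x] = gmul x gone" by (simp add: gprod_def)

lemma tens_shift: "A \<in> Mcar \<Longrightarrow> tens A B (g,q) {m+3} = A g {} * B q {m}"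
proof -
  assume A: "A \<in> Mcar"
  have "A g {m+3} = 0" by (rule Mcar_out[OF A]) auto
  then show ?thesis by (simp add: tens_def gmul_single gshift_single)
qed

lemma tens_sconst2: "tens (sconst f) (sconst g) (p,q) = scal (f p * g q)"
  unfolding tens_def sconst_scal gshift_scal fst_conv snd_conv
  by (simp add: fun_eq_iff gmul_scal_left) (simp add: scal_def)

lemma Acar_neg: "f \<in> Acar \<Longrightarrow> (\<lambda>x. - f x) \<in> Acar"
  using Acar_scale[of f "-1"] by simp

lemma tens_sconst_r: "finite U \<Longrightarrow> tens A (sconst f) (p,q) U = A p U * f q"
  by (simp add: tens_def sconst_scal gshift_scal gmul_scal_right)

lemma Pow012: "Pow {0::nat,1,2} = set SL" by (simp add: set_SL)

lemma gsubst_single: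
  assumes "\<And>k. \<sigma> k {} = 0"
  shows "gsubst \<sigma> v {n} = v {0} * \<sigma> 0 {n} + v {1} * \<sigma> 1 {n} + v {2} * \<sigma> 2 {n}"
proof -
  have "gsubst \<sigma> v {n} = (\<Sum>S\<leftarrow>SL. v S * gprod (map \<sigma> (sorted_list_of_set S)) {n})"
    unfolding gsubst_def Pow012 using distinct_SL by (simp add: sum_list_distinct_conv_sum_set)
  also have "\<dots> = v {0} * \<sigma> 0 {n} + v {1} * \<sigma> 1 {n} + v {2} * \<sigma> 2 {n}"
    by (simp add: SL_def gprod_def gmul_single gmul_empty assms gone_def)
  finally show ?thesis .
qed

lemma gsubst_ind:
  assumes "i \<in> {0,1,2}" "\<And>U. infinite U \<Longrightarrow> \<sigma> i U = 0"
  shows "gsubst \<sigma> (ind {i}) = \<sigma> i"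
proof
  fix U
  have "gsubst \<sigma> (ind {i}) U = ind {i} {i} * gprod (map \<sigma> (sorted_list_of_set {i})) U"
    unfolding gsubst_def by (rule sum_single_nz) (use assms(1) in \<open>auto simp: ind_def\<close>)
  also have "\<dots> = \<sigma> i U"
    using assms(2)[of U] by (cases "finite U") (auto simp: ind_def gprod_single gone_scal gmul_scal_right)
  finally show "gsubst \<sigma> (ind {i}) U = \<sigma> i U" .
qed

abbreviation "one' \<equiv> sconst (\<lambda>_. 1) :: sl2 sfun"

lemma decomp_R_theta: "i < 3 \<Longrightarrow> decomp (DeltaR (stheta i)) [(stheta i, one')]"
  unfolding decomp_def
proof (intro conjI)
  assume i: "i < 3"
  show "\<forall>(x, y)\<in>set [(stheta i, one')]. x \<in> Mcar \<and> y \<in> Mcar \<and> hom x \<and> hom y"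
    using i stheta_Mcar sconst_Mcar by auto
  show "DeltaR (stheta i) = ssum (map (\<lambda>(x, y). tens x y) [(stheta i, one')])"
  proof (intro ext)
    fix pq :: "sl2 \<times> sl2" and U
    show "DeltaR (stheta i) pq U = ssum (map (\<lambda>(x, y). tens x y) [(stheta i, one')]) pq U"
      by (cases pq; cases "finite U") (auto simp: DeltaR_def ssum_def sadd_def szero_def tens_def stheta_ind sconst_scal gshift_scal gmul_scal_right ind_def)
  qed
qed

lemma decomp_R_a: "decomp (DeltaR sa) [(sa,sa),(sb,sc)]"
  unfolding decomp_def
proof (intro conjI)
  show "\<forall>(x, y)\<in>set [(sa,sa),(sb,sc)]. x \<in> Mcar \<and> y \<in> Mcar \<and> hom x \<and> hom y"
    using sconst_Mcar by auto
  show "DeltaR sa = ssum (map (\<lambda>(x, y). tens x y) [(sa,sa),(sb,sc)])"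
  proof (intro ext)
    fix pq :: "sl2 \<times> sl2" and U
    show "DeltaR sa pq U = ssum (map (\<lambda>(x, y). tens x y) [(sa,sa),(sb,sc)]) pq U"
      by (cases pq) (simp add: DeltaR_def ssum_def sadd_def szero_def tens_sconst2 sconst_scal; simp add: scal_def mult_coords)
  qed
qed

definition "L00 = (\<lambda>p. 1 + 2 * cb p * cc p)"
definition "L01 = (\<lambda>p. - (ca p * cc p))"
definition "L02 = (\<lambda>p. cb p * cd p)"

lemma L_Acar: "L00 \<in> Acar" "L01 \<in> Acar" "L02 \<in> Acar"
  unfolding L00_def L01_def L02_def
  by (auto intro!: Acar_add Acar_mult Acar_scale Acar_neg simp: mult.assoc)

lemma Lgen_inf: "infinite U \<Longrightarrow> Lgen p i U = 0"
  by (auto simp: Lgen_def)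

lemma decomp_L_theta0: "decomp (DeltaL (stheta 0)) [(sconst L00, stheta 0), (sconst L01, stheta 1), (sconst L02, stheta 2)]"
  unfolding decomp_def
proof (intro conjI)
  show "\<forall>(x, y)\<in>set [(sconst L00, stheta 0), (sconst L01, stheta 1), (sconst L02, stheta 2)]. x \<in> Mcar \<and> y \<in> Mcar \<and> hom x \<and> hom y"
    using sconst_Mcar L_Acar stheta_Mcar by auto
  show "DeltaL (stheta 0) = ssum (map (\<lambda>(x, y). tens x y) [(sconst L00, stheta 0), (sconst L01, stheta 1), (sconst L02, stheta 2)])"
  proof (intro ext)
    fix pq :: "sl2 \<times> sl2" and U
    obtain p q where pq: "pq = (p,q)" by (cases pq)
    have l: "DeltaL (stheta 0) pq U = Lgen p 0 U"
      unfolding pq DeltaL_def by (simp add: stheta_ind gsubst_ind Lgen_inf)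
    have r: "ssum (map (\<lambda>(x, y). tens x y) [(sconst L00, stheta 0), (sconst L01, stheta 1), (sconst L02, stheta 2)]) pq U
       = (if finite U then L00 p * ind {3} U + L01 p * ind {4} U + L02 p * ind {5} U else 0)"
      unfolding pq by (simp add: ssum_def sadd_def szero_def tens_def stheta_ind gshift_ind sconst_scal gmul_scal_left)
    show "DeltaL (stheta 0) pq U = ssum (map (\<lambda>(x, y). tens x y) [(sconst L00, stheta 0), (sconst L01, stheta 1), (sconst L02, stheta 2)]) pq U"
      unfolding l r by (auto simp: Lgen_def ind_def L00_def L01_def L02_def)
  qed
qed


lemma tens_szero: "tens A szero = (\<lambda>_ _. 0)"
  by (simp add: tens_def szero_def gshift_zero gmul_zero_right fun_eq_iff)

locale GPL = GPS + assumes pl: "poisson_lie br"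
begin

lemma tbr_eval_R:
  assumes "i < 3" "f' \<in> Acar" "f'' \<in> Acar" "finite U"
  shows "tbr br (stheta i, one') (sconst f', sconst f'') (p,q) U = br (stheta i) (sconst f') p U * f'' q"
proof -
  have "br one' (sconst f'') = szero" using br_one sconst_Mcar assms by simp
  moreover have "smul one' (sconst f'') = sconst f''" by (simp add: sconst_mult)
  ultimately show ?thesis using assms
    by (simp add: tbr_def sscale_def sadd_def tens_szero tens_sconst_r)
qed

lemma tbr_eval_L:
  assumes "j < 3" "L \<in> Acar" "f' \<in> Acar" "f'' \<in> Acar"
  shows "tbr br (sconst L, stheta j) (sconst f', sconst f'') (g,q) {m+3}
     = br (sconst L) (sconst f') g {} * ind {j} {m} * f'' q + L g * f' g * br (stheta j) (sconst f'') q {m}"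
proof -
  have M: "br (sconst L) (sconst f') \<in> Mcar" "smul (sconst L) (sconst f') \<in> Mcar"
    using assms br_Mcar sconst_Mcar smul_Mcar by auto
  have t: "stheta j \<in> Mcar" using assms stheta_Mcar by auto
  have s1: "smul (stheta j) (sconst f'') q {m} = ind {j} {m} * f'' q"
    using smul_sconst_right[OF t] by (simp add: stheta_ind)
  have s2: "smul (sconst L) (sconst f') g {} = L g * f' g"
    by (simp only: sconst_mult) (simp add: sconst_def)
  show ?thesis
    unfolding tbr_def prod.case pdeg_sconst mult_0_right power_0 sscale_def sadd_def
    using tens_shift[OF M(1)] tens_shift[OF M(2)] s1 s2 by simp
qed

lemma DR_eq:
  assumes U: "finite U"
  shows "br (stheta 0) sa g U = br (stheta 0) sa e1 U * ca g + br (stheta 0) sb e1 U * cc g"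
proof -
  have "DeltaR (br (stheta 0) (sconst ca)) = tbrsum br [(stheta 0, one')] [(sa,sa),(sb,sc)]"
    using pl decomp_R_theta[of 0] decomp_R_a unfolding poisson_lie_def by auto
  then have "DeltaR (br (stheta 0) (sconst ca)) (e1, g) U = tbrsum br [(stheta 0, one')] [(sa,sa),(sb,sc)] (e1, g) U"
    by simp
  then show ?thesis
    by (simp add: DeltaR_def mult_e1 tbrsum_def ssum_def sadd_def szero_def tbr_eval_R U)
qed

lemma DL_eq:
  assumes m: "m < 3"
  shows "gsubst (Lgen g) (br (stheta 0) sa g) {m+3}
     = br (sconst L00) sa g {} * ind {0} {m} + L00 g * (ca g * br (stheta 0) sa e1 {m} + cb g * br (stheta 0) sc e1 {m})
     + br (sconst L01) sa g {} * ind {1} {m} + L01 g * (ca g * br (stheta 1) sa e1 {m} + cb g * br (stheta 1) sc e1 {m})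
     + br (sconst L02) sa g {} * ind {2} {m} + L02 g * (ca g * br (stheta 2) sa e1 {m} + cb g * br (stheta 2) sc e1 {m})"
proof -
  have "DeltaL (br (stheta 0) (sconst ca)) = tbrsum br [(sconst L00, stheta 0), (sconst L01, stheta 1), (sconst L02, stheta 2)] [(sa,sa),(sb,sc)]"
    using pl decomp_L_theta0 decomp_R_a unfolding poisson_lie_def by auto
  then have "DeltaL (br (stheta 0) (sconst ca)) (g, e1) {m+3} = tbrsum br [(sconst L00, stheta 0), (sconst L01, stheta 1), (sconst L02, stheta 2)] [(sa,sa),(sb,sc)] (g, e1) {m+3}"
    by simp
  then show ?thesis
    by (simp add: DeltaL_def mult_e1 tbrsum_def ssum_def sadd_def szero_def tbr_eval_L L_Acar algebra_simps)
qed

end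

lemma smul_empty: "smul x y p {} = x p {} * y p {}" by (simp add: smul_def gmul_empty)
lemma sconst_empty: "sconst f p {} = f p" by (simp add: sconst_def)

context GPS begin

lemma brL00: "br (sconst L00) sa g {} = 4 * ca g * cb g * cc g"
proof -
  have e: "sconst L00 = sadd one' (sscale 2 (smul sb sc))"
    by (simp only: sconst_mult sconst_scale sconst_add) (simp add: L00_def mult.assoc)
  have M: "smul sb sc \<in> Mcar" "sscale 2 (smul sb sc) \<in> Mcar" using gensM smul_Mcar sscale_Mcar by auto
  have h: "hom sb" "hom sc" "hom sa" by simp_all
  have "br (sconst L00) sa = sadd (br one' sa) (sscale 2 (br (smul sb sc) sa))"
    unfolding e using br_addl[OF sconst_Mcar M(2) gensM(1)] br_scl[OF M(1) gensM(1)] by simp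
  also have "\<dots> = sadd szero (sscale 2 (sadd (smul sb (br sc sa)) (sscale 1 (smul (br sb sa) sc))))"
    using br_one[OF gensM(1)] br_leib[OF gensM(2) gensM(3) gensM(1) h(1) h(2) h(3)] by simp
  finally show ?thesis by (simp add: sk_ca sk_ba sadd_def sscale_def szero_def smul_empty sconst_empty)
qed

lemma brL01: "br (sconst L01) sa g {} = - (ca g * ca g * cc g)"
proof -
  have e: "sconst L01 = sscale (-1) (smul sa sc)"
    by (simp only: sconst_mult sconst_scale) (simp add: L01_def)
  have M: "smul sa sc \<in> Mcar" using gensM smul_Mcar by auto
  have h: "hom sa" "hom sc" by simp_all
  have "br (sconst L01) sa = sscale (-1) (sadd (smul sa (br sc sa)) (sscale 1 (smul (br sa sa) sc)))"
    unfolding e using br_scl[OF M gensM(1)] br_leib[OF gensM(1) gensM(3) gensM(1) h(1) h(2) h(1)] by simp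
  then show ?thesis by (simp add: sk_ca sk_aa sadd_def sscale_def szero_def smul_empty sconst_empty)
qed

lemma brL02: "br (sconst L02) sa g {} = 2 * cb g * cb g * cc g + ca g * cb g * cd g"
proof -
  have e: "sconst L02 = smul sb sd"
    by (simp only: sconst_mult) (simp add: L02_def)
  have h: "hom sa" "hom sb" "hom sd" by simp_all
  have "br (sconst L02) sa = sadd (smul sb (br sd sa)) (sscale 1 (smul (br sb sa) sd))"
    unfolding e using br_leib[OF gensM(2) gensM(4) gensM(1) h(2) h(3) h(1)] by simp
  then show ?thesis by (simp add: sk_da sk_ba sadd_def sscale_def szero_def smul_empty sconst_empty algebra_simps)
qed

end

context GPS begin

lemma H1:
  assumes "j < 3" "f \<in> Acar" "g \<in> Acar"
  shows "br (smul (stheta j) (sconst f)) (sconst g) p {m} = ind {j} {m} * br (sconst f) (sconst g) p {} + br (stheta j) (sconst g) p {m} * f p"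
proof -
  have t: "stheta j \<in> Mcar" using assms stheta_Mcar by auto
  have B: "br (stheta j) (sconst g) \<in> Mcar" using br_Mcar t sconst_Mcar assms by auto
  note L = br_leib[OF t sconst_Mcar[OF assms(2)] sconst_Mcar[OF assms(3)] hom_stheta hom_sconst hom_sconst]
  show ?thesis unfolding L
    by (simp add: sadd_def sscale_def smul_sconst_right[OF B]) (simp add: smul_def stheta_ind gmul_single ind_def)
qed

lemma H2:
  assumes "j < 3" "f \<in> Acar" "g \<in> Acar"
  shows "br (sconst g) (smul (stheta j) (sconst f)) p {m} = - (ind {j} {m} * br (sconst f) (sconst g) p {} + br (stheta j) (sconst g) p {m} * f p)"
proof -
  have t: "smul (stheta j) (sconst f) \<in> Mcar" using assms stheta_Mcar sconst_Mcar smul_Mcar by auto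
  have h: "hom (smul (stheta j) (sconst f))" by (simp add: hom_def oddp_smul_oe)
  have "br (sconst g) (smul (stheta j) (sconst f)) = sscale (-1) (br (smul (stheta j) (sconst f)) (sconst g))"
    using br_even_left[OF sconst_Mcar[OF assms(3)] t _ h] by simp
  then show ?thesis using H1[OF assms, of p m] by (simp add: sscale_def)
qed

lemma sk_e1:
  "br sa sb e1 {} = 0" "br sb sa e1 {} = 0" "br sa sc e1 {} = 0" "br sc sa e1 {} = 0"
  "br sc sb e1 {} = 0" "br sd sa e1 {} = 0" "br sa sa e1 {} = 0" "br sc sc e1 {} = 0"
  by (simp_all add: sk_ab sk_ba sk_ac sk_ca sk_cb sk_da sk_aa sk_cc sscale_def smul_empty sconst_empty szero_def)

end

locale GPD = GPL + fixes d :: "sl2 sfun \<Rightarrow> sl2 sfun"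
  assumes ed: "is_ext_deriv d" and dfl: "differential d br"
begin

lemma d_Mcar: "x \<in> Mcar \<Longrightarrow> d x \<in> Mcar" using ed unfolding is_ext_deriv_def by blast
lemma d_scale: "x \<in> Mcar \<Longrightarrow> d (sscale c x) = sscale c (d x)" using ed unfolding is_ext_deriv_def by blast
lemma d_leib: "x \<in> Mcar \<Longrightarrow> y \<in> Mcar \<Longrightarrow> hom x \<Longrightarrow> d (smul x y) = sadd (smul (d x) y) (sscale ((-1) ^ pdeg x) (smul x (d y)))"
  using ed unfolding is_ext_deriv_def by blast
lemma d_gens:
  "d sa = sadd (smul (stheta 0) sa) (smul (stheta 1) sc)"
  "d sb = sadd (smul (stheta 0) sb) (smul (stheta 1) sd)"
  "d sc = sadd (smul (stheta 2) sa) (sscale (-1) (smul (stheta 0) sc))"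
  "d sd = sadd (smul (stheta 2) sb) (sscale (-1) (smul (stheta 0) sd))"
  using ed unfolding is_ext_deriv_def by blast+
lemma diff: "f \<in> Mcar \<Longrightarrow> h \<in> Mcar \<Longrightarrow> hom f \<Longrightarrow> hom h \<Longrightarrow> d (br f h) = sadd (br (d f) h) (sscale ((-1) ^ pdeg f) (br f (d h)))"
  using dfl unfolding differential_def by blast

lemma thM: "smul (stheta j) (sconst f) \<in> Mcar" if "j < 3" "f \<in> Acar" for j f
  using that stheta_Mcar sconst_Mcar smul_Mcar by auto

lemma d_smul_e1:
  assumes "f \<in> Acar" "g \<in> Acar"
  shows "d (smul (sconst f) (sconst g)) e1 {m} = d (sconst f) e1 {m} * g e1 + f e1 * d (sconst g) e1 {m}"
proof -
  have M: "d (sconst f) \<in> Mcar" "d (sconst g) \<in> Mcar" using d_Mcar sconst_Mcar assms by auto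
  show ?thesis using d_leib[OF sconst_Mcar[OF assms(1)] sconst_Mcar[OF assms(2)] hom_sconst]
    by (simp add: sadd_def sscale_def smul_sconst_right[OF M(1)] smul_sconst_left[OF M(2)])
qed

lemma dgen_e1:
  "d sa e1 {m} = ind {0} {m}" "d sb e1 {m} = ind {1} {m}" "d sc e1 {m} = ind {2} {m}"
  by (simp_all add: d_gens sadd_def sscale_def smul_sconst_right stheta_Mcar stheta_ind)

lemma DF_ab: "- ind {1} {m} = br (stheta 0) sb e1 {m} - br (stheta 1) sa e1 {m}"
proof -
  have Mab: "smul sa sb \<in> Mcar" using gensM smul_Mcar by auto
  have "d (br sa sb) e1 {m} = - ind {1} {m}"
    unfolding sk_ab d_scale[OF Mab] using d_smul_e1[of ca cb] by (simp add: sscale_def dgen_e1)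
  moreover have "d (br sa sb) = sadd (br (d sa) sb) (sscale 1 (br sa (d sb)))"
    using diff[OF gensM(1) gensM(2)] by simp
  moreover have "br (d sa) sb = sadd (br (smul (stheta 0) sa) sb) (br (smul (stheta 1) sc) sb)"
    unfolding d_gens by (rule br_addl) (auto intro: thM gensM)
  moreover have "br sa (d sb) = sadd (br sa (smul (stheta 0) sb)) (br sa (smul (stheta 1) sd))"
    unfolding d_gens by (rule br_addr) (auto intro: thM gensM)
  ultimately show ?thesis
    by (simp add: sadd_def sscale_def H1 H2 sk_e1 sk_ab sk_ba sk_cb sk_da smul_empty sconst_empty szero_def)
qed

end

context GPD begin
lemma DF_ac: "- ind {2} {m} = br (stheta 0) sc e1 {m} - br (stheta 2) sa e1 {m}"
proof -
  have Mac: "smul sa sc \<in> Mcar" using gensM smul_Mcar by auto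
  have M0c: "smul (stheta 0) sc \<in> Mcar" by (auto intro: thM)
  have "d (br sa sc) e1 {m} = - ind {2} {m}"
    unfolding sk_ac d_scale[OF Mac] using d_smul_e1[of ca cc] by (simp add: sscale_def dgen_e1)
  moreover have "d (br sa sc) = sadd (br (d sa) sc) (sscale 1 (br sa (d sc)))"
    using diff[OF gensM(1) gensM(3)] by simp
  moreover have "br (d sa) sc = sadd (br (smul (stheta 0) sa) sc) (br (smul (stheta 1) sc) sc)"
    unfolding d_gens by (rule br_addl) (auto intro: thM gensM)
  moreover have "br sa (d sc) = sadd (br sa (smul (stheta 2) sa)) (sscale (-1) (br sa (smul (stheta 0) sc)))"
    unfolding d_gens using br_addr[OF thM sscale_Mcar[OF M0c] gensM(1)] br_scr[OF gensM(1) M0c] by simp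
  ultimately show ?thesis
    by (simp add: sadd_def sscale_def H1 H2 sk_e1 sk_ac sk_ca sk_cc sk_aa smul_empty sconst_empty szero_def)
qed
end

context GPD begin

lemma JAC:
  "br (stheta 0) sa e1 {0} * br (stheta 0) sb e1 {1} + br (stheta 0) sa e1 {1} * br (stheta 1) sb e1 {1} + br (stheta 0) sa e1 {2} * br (stheta 2) sb e1 {1}
   - (br (stheta 0) sb e1 {0} * br (stheta 0) sa e1 {1} + br (stheta 0) sb e1 {1} * br (stheta 1) sa e1 {1} + br (stheta 0) sb e1 {2} * br (stheta 2) sa e1 {1})
   + br (stheta 0) sb e1 {1} = 0"
proof -
  have t0: "stheta 0 \<in> Mcar" by (simp add: stheta_Mcar)
  have P: "br (stheta 0) sa \<in> Mcar" "br (stheta 0) sb \<in> Mcar" using br_Mcar t0 gensM by auto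
  note J = br_jac[OF t0 gensM(1) gensM(2) hom_stheta hom_sconst hom_sconst]
  have J1: "br (br (stheta 0) sa) sb e1 {1} + br (br sb (stheta 0)) sa e1 {1} + br (br sa sb) (stheta 0) e1 {1} = 0"
    using fun_cong[OF fun_cong[OF J, of e1], of "{1}"] by (simp add: sadd_def sscale_def szero_def add.assoc)
  have T1: "br (br (stheta 0) sa) sb e1 {1} = br (stheta 0) sa e1 {0} * br (stheta 0) sb e1 {1} + br (stheta 0) sa e1 {1} * br (stheta 1) sb e1 {1} + br (stheta 0) sa e1 {2} * br (stheta 2) sb e1 {1}"
    by (rule br_at_e1[OF P(1) gensM(2)]) (simp_all add: brA_b)
  have bs: "br sb (stheta 0) = sscale (-1) (br (stheta 0) sb)"
    using br_even_left[OF gensM(2) t0] by simp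
  have T2: "br (br sb (stheta 0)) sa e1 {1} = - (br (stheta 0) sb e1 {0} * br (stheta 0) sa e1 {1} + br (stheta 0) sb e1 {1} * br (stheta 1) sa e1 {1} + br (stheta 0) sb e1 {2} * br (stheta 2) sa e1 {1})"
    unfolding bs br_scl[OF P(2) gensM(1)] using br_at_e1[OF P(2) gensM(1) _ brA_a] by (simp add: sscale_def)
  have Mab: "smul sa sb \<in> Mcar" using gensM smul_Mcar by auto
  have Bb: "br sb (stheta 0) \<in> Mcar" "br sa (stheta 0) \<in> Mcar" using br_Mcar t0 gensM by auto
  have T3: "br (br sa sb) (stheta 0) e1 {1} = br (stheta 0) sb e1 {1}"
    unfolding sk_ab br_scl[OF Mab t0] br_leib[OF gensM(1) gensM(2) t0 hom_sconst hom_sconst hom_stheta]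
      smul_sconst_left[OF Bb(1)] smul_sconst_right[OF Bb(2)]
    by (simp add: sadd_def sscale_def bs)
  show ?thesis using J1 unfolding T1 T2 T3 by (simp add: algebra_simps)
qed

lemma Lgen_empty: "Lgen g k {} = 0" by (simp add: Lgen_def)

lemma DL_full:
  assumes m: "m < 3"
  shows "(br (stheta 0) sa e1 {0} * ca g + br (stheta 0) sb e1 {0} * cc g) * Lgen g 0 {m+3}
       + (br (stheta 0) sa e1 {1} * ca g + br (stheta 0) sb e1 {1} * cc g) * Lgen g 1 {m+3}
       + (br (stheta 0) sa e1 {2} * ca g + br (stheta 0) sb e1 {2} * cc g) * Lgen g 2 {m+3}
     = 4 * ca g * cb g * cc g * ind {0} {m} + L00 g * (ca g * br (stheta 0) sa e1 {m} + cb g * br (stheta 0) sc e1 {m})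
     - (ca g * ca g * cc g) * ind {1} {m} + L01 g * (ca g * br (stheta 1) sa e1 {m} + cb g * br (stheta 1) sc e1 {m})
     + (2 * cb g * cb g * cc g + ca g * cb g * cd g) * ind {2} {m} + L02 g * (ca g * br (stheta 2) sa e1 {m} + cb g * br (stheta 2) sc e1 {m})"
proof -
  have "gsubst (Lgen g) (br (stheta 0) sa g) {m+3} = br (stheta 0) sa g {0} * Lgen g 0 {m+3} + br (stheta 0) sa g {1} * Lgen g 1 {m+3} + br (stheta 0) sa g {2} * Lgen g 2 {m+3}"
    by (rule gsubst_single) (simp add: Lgen_empty)
  then show ?thesis using DL_eq[OF m, of g] DR_eq[of "{0}" g] DR_eq[of "{1}" g] DR_eq[of "{2}" g]
    by (simp add: brL00 brL01 brL02)
qed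

end

definition "g1 = Abs_sl2 (1,1,0,1)"
definition "g2 = Abs_sl2 (1,0,1,1)"
definition "g3 = Abs_sl2 (1,1,1,2)"
definition "g4 = Abs_sl2 (3,1,2,1)"
lemma g_coords:
  "ca g1 = 1" "cb g1 = 1" "cc g1 = 0" "cd g1 = 1"
  "ca g2 = 1" "cb g2 = 0" "cc g2 = 1" "cd g2 = 1"
  "ca g3 = 1" "cb g3 = 1" "cc g3 = 1" "cd g3 = 2"
  "ca g4 = 3" "cb g4 = 1" "cc g4 = 2" "cd g4 = 1"
  unfolding g1_def g2_def g3_def g4_def by (simp_all add: Abs_coords)

context GPD begin

lemma final: False
proof -
  note DLs = DL_full[of 0 g1] DL_full[of 1 g1] DL_full[of 2 g1]
    DL_full[of 0 g2] DL_full[of 1 g2] DL_full[of 2 g2]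
    DL_full[of 0 g3] DL_full[of 1 g3] DL_full[of 2 g3]
    DL_full[of 0 g4] DL_full[of 1 g4] DL_full[of 2 g4]
  note E = DLs[simplified, unfolded Lgen_def L00_def L01_def L02_def g_coords ind_def, simplified]
  note F = DF_ab[of 0] DF_ab[of 1] DF_ab[of 2] DF_ac[of 0] DF_ac[of 1] DF_ac[of 2]
  note F2 = F[unfolded ind_def, simplified]
  show False using E F2 JAC
    by algebra
qed
end

theorem theorem2:
  assumes "is_ext_deriv d"
  shows "\<not> (\<exists>br. graded_poisson br \<and> poisson_lie br \<and> prolongs_sklyanin br \<and> differential d br)"
proof
  assume "\<exists>br. graded_poisson br \<and> poisson_lie br \<and> prolongs_sklyanin br \<and> differential d br"
  then obtain br where h: "graded_poisson br" "poisson_lie br" "prolongs_sklyanin br" "differential d br" by blast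
  interpret GPD br d
    by (unfold_locales) (simp_all add: h assms)
  show False by (rule final)
qed

end
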